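(* For every strict partition $\lambda$, as formal power series, $$K_\lambda(x_1,x_2,\ldots)=(-1)^{|\lambda|}\, GP_\lambda\!\left(\frac{-x_1}{1-x_1},\frac{-x_2}{1-x_2},\ldots\right).$$
   Context: A strict partition $\lambda=(\lambda_1>\dots>\lambda_\ell>0)$ has shifted shape consisting of the boxes $(i,j)$ with $1\le i\le\ell$, $i\le j\le i+\lambda_i-1$; $|\lambda|=\sum\lambda_i$; boxes $(i,i)$ form the main diagonal. Order $1'<1<2'<2<\cdots$. A weak set-valued shifted tableau of shape $\lambda$ is a filling of the shifted shape with finite nonempty multisets of primed and unprimed positive integers such that: (1) the smallest element in each box is $\ge$ the largest element in the box directly to its left; (2) the smallest element in each box is $\ge$ the largest element in the box directly above it; (3) no primed entries on the main diagonal; (4) each unprimed integer appears in at most one box of each column; (5) each primed integer appears in at most one box of each row. A set-valued shifted tableau is the same but with finite nonempty sets instead of multisets. For either kind, $x^T=\prod_i x_i^{a_i}$ with $a_i$ the number of occurrences of $i$ and $i'$ in $T$, and $|T|$ is the total degree of $x^T$. $K_\lambda=\sum_T x^T$ over weak set-valued shifted tableaux of shape $\lambda$; $GP_\lambda=\sum_T(-1)^{|T|-|\lambda|}x^T$ over set-valued shifted tableaux of shape $\lambda$. *)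

theory Defs
  imports Main "HOL-Library.Multiset" "HOL-Computational_Algebra.Formal_Power_Series"
begin

text \<open>A strict partition is a list lam = [lam_1, ..., lam_l] of positive integers,
  strictly decreasing. Rows and columns are 1-indexed; lam_i = lam ! (i - 1).\<close>

definition strict_partition :: "nat list \<Rightarrow> bool" where
  "strict_partition lam \<longleftrightarrow> sorted_wrt (>) lam \<and> 0 \<notin> set lam"

definition shifted_shape :: "nat list \<Rightarrow> (nat \<times> nat) set" where
  "shifted_shape lam = {(i, j). 1 \<le> i \<and> i \<le> length lam \<and> i \<le> j \<and> j + 1 \<le> i + lam ! (i - 1)}"

definition psize :: "nat list \<Rightarrow> nat" where
  "psize lam = sum_list lam"

text \<open>An entry is a pair (k, p) with k a positive integer and p = True iff the entry is primed
  (i.e. it is k'). The total order 1' < 1 < 2' < 2 < ... is given by the key 2k - [p].\<close>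

type_synonym entry = "nat \<times> bool"

definition ekey :: "entry \<Rightarrow> nat" where
  "ekey e = 2 * fst e - (if snd e then 1 else 0)"

definition weak_svt :: "nat list \<Rightarrow> (nat \<times> nat \<Rightarrow> entry multiset) \<Rightarrow> bool" where
  "weak_svt lam T \<longleftrightarrow>
     (\<forall>b. b \<notin> shifted_shape lam \<longrightarrow> T b = {#}) \<and>
     (\<forall>b \<in> shifted_shape lam. T b \<noteq> {#} \<and> (\<forall>e \<in># T b. 1 \<le> fst e)) \<and>
     (\<forall>i j. (i, j) \<in> shifted_shape lam \<longrightarrow> (i, j - 1) \<in> shifted_shape lam \<longrightarrow> 1 \<le> j \<longrightarrow>
        (\<forall>x \<in># T (i, j). \<forall>y \<in># T (i, j - 1). ekey y \<le> ekey x)) \<and>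
     (\<forall>i j. (i, j) \<in> shifted_shape lam \<longrightarrow> (i - 1, j) \<in> shifted_shape lam \<longrightarrow> 1 \<le> i \<longrightarrow>
        (\<forall>x \<in># T (i, j). \<forall>y \<in># T (i - 1, j). ekey y \<le> ekey x)) \<and>
     (\<forall>i. (i, i) \<in> shifted_shape lam \<longrightarrow> (\<forall>e \<in># T (i, i). \<not> snd e)) \<and>
     (\<forall>k j. card {i. (i, j) \<in> shifted_shape lam \<and> (k, False) \<in># T (i, j)} \<le> 1) \<and>
     (\<forall>k i. card {j. (i, j) \<in> shifted_shape lam \<and> (k, True) \<in># T (i, j)} \<le> 1)"

definition wcontent :: "nat list \<Rightarrow> (nat \<times> nat \<Rightarrow> entry multiset) \<Rightarrow> nat \<Rightarrow> nat" where
  "wcontent lam T k = (\<Sum>b \<in> shifted_shape lam. count (T b) (k, False) + count (T b) (k, True))"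

definition svt :: "nat list \<Rightarrow> (nat \<times> nat \<Rightarrow> entry set) \<Rightarrow> bool" where
  "svt lam T \<longleftrightarrow>
     (\<forall>b. b \<notin> shifted_shape lam \<longrightarrow> T b = {}) \<and>
     (\<forall>b \<in> shifted_shape lam. finite (T b) \<and> T b \<noteq> {} \<and> (\<forall>e \<in> T b. 1 \<le> fst e)) \<and>
     (\<forall>i j. (i, j) \<in> shifted_shape lam \<longrightarrow> (i, j - 1) \<in> shifted_shape lam \<longrightarrow> 1 \<le> j \<longrightarrow>
        (\<forall>x \<in> T (i, j). \<forall>y \<in> T (i, j - 1). ekey y \<le> ekey x)) \<and>
     (\<forall>i j. (i, j) \<in> shifted_shape lam \<longrightarrow> (i - 1, j) \<in> shifted_shape lam \<longrightarrow> 1 \<le> i \<longrightarrow>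
        (\<forall>x \<in> T (i, j). \<forall>y \<in> T (i - 1, j). ekey y \<le> ekey x)) \<and>
     (\<forall>i. (i, i) \<in> shifted_shape lam \<longrightarrow> (\<forall>e \<in> T (i, i). \<not> snd e)) \<and>
     (\<forall>k j. card {i. (i, j) \<in> shifted_shape lam \<and> (k, False) \<in> T (i, j)} \<le> 1) \<and>
     (\<forall>k i. card {j. (i, j) \<in> shifted_shape lam \<and> (k, True) \<in> T (i, j)} \<le> 1)"

definition scontent :: "nat list \<Rightarrow> (nat \<times> nat \<Rightarrow> entry set) \<Rightarrow> nat \<Rightarrow> nat" where
  "scontent lam T k = (\<Sum>b \<in> shifted_shape lam. card {p. (k, p) \<in> T b})"

definition ssize :: "nat list \<Rightarrow> (nat \<times> nat \<Rightarrow> entry set) \<Rightarrow> nat" where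
  "ssize lam T = (\<Sum>b \<in> shifted_shape lam. card (T b))"

text \<open>A formal power series in the variables x_1, x_2, ... (over rat) is represented by its
  coefficient function on exponent vectors m :: nat \<Rightarrow> nat (m k = exponent of x_k; monomials
  are the finitely supported m).\<close>

type_synonym mps = "(nat \<Rightarrow> nat) \<Rightarrow> rat"

definition K_series :: "nat list \<Rightarrow> mps" where
  "K_series lam m = of_nat (card {T. weak_svt lam T \<and> wcontent lam T = m})"

definition GP_series :: "nat list \<Rightarrow> mps" where
  "GP_series lam m =
     (\<Sum>T \<in> {T. svt lam T \<and> scontent lam T = m}. (-1) ^ (ssize lam T - psize lam))"

text \<open>Substitution x_k \<mapsto> g(x_k) for every variable, where g is a univariate formal power series
  with zero constant term: F(g(x_1), g(x_2), ...) = \<Sum>_a F_a \<Prod>_k g(x_k)^(a_k).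
  Its coefficient at x^b is \<Sum>_a F_a \<Prod>_k [x^(b_k)] g^(a_k); only a \<le> b contribute since
  g^(a_k) has order \<ge> a_k, and factors with a_k = b_k = 0 equal 1.\<close>

definition subst_each_var :: "rat fps \<Rightarrow> mps \<Rightarrow> mps" where
  "subst_each_var g F b =
     (\<Sum>a \<in> {a. \<forall>k. a k \<le> b k}. F a * (\<Prod>k \<in> {k. b k \<noteq> 0}. fps_nth (g ^ a k) (b k)))"

end

theory Submission
  imports Defs "HOL-Library.FuncSet"
begin

lemma comp_card:
  fixes E :: "'a set" and m :: nat
  assumes fin: "finite E" and ne: "E \<noteq> {}" and le: "card E \<le> m"
  shows "card {\<nu>::'a\<Rightarrow>nat. (\<forall>x. x \<notin> E \<longrightarrow> \<nu> x = 0) \<and> (\<forall>x\<in>E. 1 \<le> \<nu> x) \<and> sum \<nu> E = m}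
           = (m - 1) choose (m - card E)"
    (is "card ?C = _")
proof -
  define f where "f = (\<lambda>M::'a multiset. \<lambda>x. if x \<in> E then count M x + 1 else 0)"
  have sz: "size M = sum (count M) E" if "set_mset M \<subseteq> E" for M
  proof -
    have "size M = sum (count M) (set_mset M)"
      by (simp add: size_multiset_overloaded_eq)
    also have "\<dots> = sum (count M) E"
      by (rule sum.mono_neutral_left) (use fin that in \<open>auto simp: not_in_iff\<close>)
    finally show ?thesis .
  qed
  have bij: "bij_betw f (multisets_of_size E (m - card E)) ?C"
  proof (rule bij_betw_imageI)
    show "inj_on f (multisets_of_size E (m - card E))"
    proof (rule inj_onI)
      fix M N assume M: "M \<in> multisets_of_size E (m - card E)" and N: "N \<in> multisets_of_size E (m - card E)"
        and eq: "f M = f N"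
      show "M = N"
      proof (rule multiset_eqI)
        fix x show "count M x = count N x"
        proof (cases "x \<in> E")
          case True then show ?thesis using fun_cong[OF eq, of x] by (simp add: f_def)
        next
          case False
          then have "x \<notin># M" "x \<notin># N" using M N by (auto simp: multisets_of_size_def)
          then show ?thesis by (simp add: not_in_iff)
        qed
      qed
    qed
  next
    show "f ` multisets_of_size E (m - card E) = ?C"
    proof (intro equalityI subsetI)
      fix \<nu> assume "\<nu> \<in> f ` multisets_of_size E (m - card E)"
      then obtain M where M: "M \<in> multisets_of_size E (m - card E)" and nu: "\<nu> = f M" by auto
      have "sum \<nu> E = sum (\<lambda>x. count M x + 1) E" unfolding nu f_def by (rule sum.cong) auto
      also have "\<dots> = size M + card E" using sz[of M] M by (simp add: sum_Suc multisets_of_size_def)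
      also have "\<dots> = m" using M le by (simp add: multisets_of_size_def)
      finally show "\<nu> \<in> ?C" unfolding nu f_def by auto
    next
      fix \<nu> assume nu: "\<nu> \<in> ?C"
      define g where "g = (\<lambda>x. if x \<in> E then \<nu> x - 1 else 0)"
      have gm: "finite {x. g x > 0}" unfolding g_def
        by (rule finite_subset[OF _ fin]) auto
      define M where "M = Abs_multiset g"
      have cM: "count M = g" unfolding M_def using gm by (simp add: count_Abs_multiset)
      have sub: "set_mset M \<subseteq> E" using cM by (auto simp: g_def set_mset_def split: if_splits)
      have "sum \<nu> E = sum (\<lambda>x. g x + 1) E" using nu by (intro sum.cong) (auto simp: g_def)
      also have "\<dots> = size M + card E" using sz[OF sub] cM by (simp add: sum_Suc)
      finally have "size M = m - card E" using nu by auto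
      then have Min: "M \<in> multisets_of_size E (m - card E)" using sub by (simp add: multisets_of_size_def)
      have "f M = \<nu>" using nu by (auto simp: f_def cM g_def fun_eq_iff)
      then show "\<nu> \<in> f ` multisets_of_size E (m - card E)" using Min by blast
    qed
  qed
  have "card ?C = card (multisets_of_size E (m - card E))"
    using bij_betw_same_card[OF bij] by simp
  also have "\<dots> = (card E + (m - card E) - 1) choose (m - card E)"
    by (rule card_multisets_of_size[OF fin])
  also have "card E + (m - card E) - 1 = m - 1" using le by simp
  finally show ?thesis .
qed

lemma comp_finite:
  fixes E :: "'a set" and m :: nat
  assumes fin: "finite E"
  shows "finite {\<nu>::'a\<Rightarrow>nat. (\<forall>x. x \<notin> E \<longrightarrow> \<nu> x = 0) \<and> (\<forall>x\<in>E. 1 \<le> \<nu> x) \<and> sum \<nu> E = m}"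
proof -
  have "{\<nu>. (\<forall>x. x \<notin> E \<longrightarrow> \<nu> x = 0) \<and> (\<forall>x\<in>E. 1 \<le> \<nu> x) \<and> sum \<nu> E = m}
        \<subseteq> {f. \<forall>x. (x \<in> E \<longrightarrow> f x \<in> {..m}) \<and> (x \<notin> E \<longrightarrow> f x = 0)}"
    using fin by (auto intro!: member_le_sum[where f="\<nu>" for \<nu>])
  then show ?thesis by (rule finite_subset) (intro finite_set_of_finite_funs fin finite_atMost)
qed

lemma g_pow_nth:
  assumes "1 \<le> m"
  shows "fps_nth ((- fps_X / (1 - fps_X) :: rat fps) ^ n) m =
         (if n = 0 then 0 else if n \<le> m then (-1) ^ n * of_nat ((m - 1) choose (m - n)) else 0)"
proof -
  have d: "- fps_X / (1 - fps_X) = (-1) * (fps_X * inverse (1 - fps_const (1::rat) * fps_X))"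
    by (simp add: fps_divide_unit)
  have eq: "((- fps_X / (1 - fps_X) :: rat fps) ^ n) = (-1)^n * (fps_X ^ n * inverse ((1 - fps_const (1::rat) * fps_X) ^ n))"
    by (simp only: d power_mult_distrib fps_inverse_power)
  have "fps_nth ((-1::rat fps)^n * F) m = (-1)^n * fps_nth F m" for F
    by (cases "even n") simp_all
  moreover have inv: "n > 0 \<Longrightarrow> inverse ((1 - fps_X)^n :: rat fps) = Abs_fps (\<lambda>k. of_nat ((n+k-1) choose k))"
    using one_minus_const_fps_X_neg_power'[of n "1::rat"] by simp
  ultimately show ?thesis
    using assms by (auto simp: eq fps_X_power_mult_nth)
qed

lemma shape_Sigma: "shifted_shape lam = Sigma {1..length lam} (\<lambda>i. {i..<i + lam ! (i - 1)})"
  unfolding shifted_shape_def by auto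

lemma finite_shape: "finite (shifted_shape lam)"
  unfolding shape_Sigma by auto

lemma card_shape: "card (shifted_shape lam) = psize lam"
proof -
  have "card (shifted_shape lam) = (\<Sum>i\<in>{1..length lam}. lam ! (i - 1))"
    unfolding shape_Sigma by (simp add: card_SigmaI)
  also have "\<dots> = (\<Sum>i<length lam. lam ! i)"
    by (rule sum.reindex_bij_witness[where i = Suc and j = "\<lambda>i. i - 1"]) auto
  also have "\<dots> = sum_list lam" by (simp add: sum_list_sum_nth atLeast0LessThan)
  finally show ?thesis by (simp add: psize_def)
qed

lemma weak_svt_iff: "weak_svt lam T \<longleftrightarrow> svt lam (\<lambda>x. set_mset (T x))"
  unfolding weak_svt_def svt_def by auto

lemma sum_bool_shape:
  fixes \<nu> :: "(nat \<times> nat) \<times> bool \<Rightarrow> nat"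
  assumes "finite A" "\<forall>x. x \<notin> E \<longrightarrow> \<nu> x = 0" "E \<subseteq> A \<times> UNIV"
  shows "sum \<nu> E = (\<Sum>box\<in>A. \<nu> (box, False) + \<nu> (box, True))"
proof -
  have "sum \<nu> E = sum \<nu> (A \<times> UNIV)"
    by (rule sum.mono_neutral_left) (use assms in auto)
  also have "\<dots> = (\<Sum>box\<in>A. \<Sum>p\<in>UNIV. \<nu> (box, p))"
    by (simp add: sum.cartesian_product)
  also have "\<dots> = (\<Sum>box\<in>A. \<nu> (box, False) + \<nu> (box, True))"
    by (simp add: UNIV_bool)
  finally show ?thesis .
qed

lemma entry_in_B:
  assumes S: "svt lam S" and le: "\<forall>k. scontent lam S k \<le> b k" and e: "(k, p) \<in> S box"
  shows "b k \<noteq> 0" "box \<in> shifted_shape lam" "1 \<le> scontent lam S k"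
proof -
  show bs: "box \<in> shifted_shape lam"
  proof (rule ccontr)
    assume "box \<notin> shifted_shape lam"
    then have "S box = {}" using S unfolding svt_def by blast
    with e show False by auto
  qed
  have "1 \<le> card {p. (k, p) \<in> S box}"
    using e by (auto simp: card_gt_0_iff Suc_le_eq)
  also have "\<dots> \<le> scontent lam S k"
    unfolding scontent_def by (rule member_le_sum[OF bs _ finite_shape]) auto
  finally show "1 \<le> scontent lam S k" .
  then show "b k \<noteq> 0" using le[rule_format, of k] by auto
qed

lemma card_Ek:
  shows "card {(box, p). box \<in> shifted_shape lam \<and> (k, p) \<in> S box} = scontent lam S k"
proof -
  have "{(box, p). box \<in> shifted_shape lam \<and> (k, p) \<in> S box}
        = Sigma (shifted_shape lam) (\<lambda>box. {p. (k, p) \<in> S box})" by auto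
  then show ?thesis by (simp add: card_SigmaI finite_shape scontent_def)
qed


lemma fiber:
  fixes b :: "nat \<Rightarrow> nat" and S :: "nat \<times> nat \<Rightarrow> entry set"
  assumes S: "svt lam S" and le: "\<forall>k. scontent lam S k \<le> b k" and finB: "finite {k. b k \<noteq> 0}"
    and pos: "\<forall>k. b k \<noteq> 0 \<longrightarrow> 1 \<le> scontent lam S k"
  shows "finite {T. weak_svt lam T \<and> wcontent lam T = b \<and> (\<lambda>x. set_mset (T x)) = S}"
    "card {T. weak_svt lam T \<and> wcontent lam T = b \<and> (\<lambda>x. set_mset (T x)) = S}
       = (\<Prod>k\<in>{k. b k \<noteq> 0}. (b k - 1) choose (b k - scontent lam S k))"
proof -
  define sh where "sh = shifted_shape lam"
  define B where "B = {k. b k \<noteq> 0}"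
  define E where "E = (\<lambda>k. {(box, p). box \<in> sh \<and> (k, p) \<in> S box})"
  define C where "C = (\<lambda>k. {\<nu>::(nat\<times>nat)\<times>bool\<Rightarrow>nat. (\<forall>x. x \<notin> E k \<longrightarrow> \<nu> x = 0) \<and> (\<forall>x\<in>E k. 1 \<le> \<nu> x) \<and> sum \<nu> (E k) = b k})"
  define Fb where "Fb = {T. weak_svt lam T \<and> wcontent lam T = b \<and> (\<lambda>x. set_mset (T x)) = S}"
  define \<Psi> where "\<Psi> = (\<lambda>T::nat\<times>nat\<Rightarrow>entry multiset. \<lambda>k\<in>B. (\<lambda>(box, p). if box \<in> sh then count (T box) (k, p) else 0))"
  have PsiT: "\<Psi> T k = (if k \<in> B then (\<lambda>(box, p). if box \<in> sh then count (T box) (k, p) else 0) else undefined)" for T k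
    by (simp add: \<Psi>_def)
  have fsh: "finite sh" unfolding sh_def by (rule finite_shape)
  have Esub: "E k \<subseteq> sh \<times> UNIV" for k unfolding E_def by auto
  have finE: "finite (E k)" for k using Esub[of k] fsh by (meson finite_SigmaI finite_UNIV finite_subset)
  have cardE: "card (E k) = scontent lam S k" for k unfolding E_def sh_def by (rule card_Ek)
  have inB: "k \<in> B" "box \<in> sh" if "(k, p) \<in> S box" for k p box
    using entry_in_B[OF S le that] unfolding B_def sh_def by auto
  have Sout: "S box = {}" if "box \<notin> sh" for box
    using S that unfolding svt_def sh_def by blast
  have FbD: "set_mset (T box) = S box" if "T \<in> Fb" for T box
    using that unfolding Fb_def by auto
  have bij: "bij_betw \<Psi> Fb (Pi\<^sub>E B C)"
  proof (rule bij_betw_imageI)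
    show "inj_on \<Psi> Fb"
    proof (rule inj_onI)
      fix T T' assume T: "T \<in> Fb" and T': "T' \<in> Fb" and eq: "\<Psi> T = \<Psi> T'"
      show "T = T'"
      proof
        fix box show "T box = T' box"
        proof (rule multiset_eqI)
          fix e :: entry
          obtain k p where e: "e = (k, p)" by fastforce
          show "count (T box) e = count (T' box) e"
          proof (cases "e \<in> S box")
            case True
            then have "k \<in> B" "box \<in> sh" using inB e by auto
            then show ?thesis using fun_cong[OF fun_cong[OF eq, of k], of "(box, p)"] e
              by (simp add: \<Psi>_def)
          next
            case False
            then have "e \<notin># T box" "e \<notin># T' box" using FbD[OF T] FbD[OF T'] by auto
            then show ?thesis by (simp add: not_in_iff)
          qed
        qed
      qed
    qed
  next
    show "\<Psi> ` Fb = Pi\<^sub>E B C"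
    proof (intro equalityI subsetI)
      fix F assume "F \<in> \<Psi> ` Fb"
      then obtain T where T: "T \<in> Fb" and F: "F = \<Psi> T" by auto
      show "F \<in> Pi\<^sub>E B C"
      proof
        fix k assume k: "k \<in> B"
        define \<nu> where "\<nu> = (\<lambda>(box, p). if box \<in> sh then count (T box) (k, p) else 0)"
        have Fk: "F k = \<nu>" using k by (simp add: F \<Psi>_def \<nu>_def)
        have z: "\<forall>x. x \<notin> E k \<longrightarrow> \<nu> x = 0"
          using FbD[OF T] by (auto simp: \<nu>_def E_def count_eq_zero_iff)
        have o: "\<forall>x\<in>E k. 1 \<le> \<nu> x"
          using FbD[OF T] by (auto simp: \<nu>_def E_def Suc_le_eq)
        have "sum \<nu> (E k) = (\<Sum>box\<in>sh. \<nu> (box, False) + \<nu> (box, True))"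
          by (rule sum_bool_shape[OF fsh z Esub])
        also have "\<dots> = wcontent lam T k"
          unfolding wcontent_def sh_def[symmetric] by (rule sum.cong) (auto simp: \<nu>_def)
        also have "\<dots> = b k" using T by (simp add: Fb_def)
        finally show "F k \<in> C k" using z o by (simp add: Fk C_def)
      next
        fix k assume "k \<notin> B" then show "F k = undefined" by (simp add: F \<Psi>_def)
      qed
    next
      fix F assume F: "F \<in> Pi\<^sub>E B C"
      define g where "g = (\<lambda>box (e::entry). if box \<in> sh \<and> fst e \<in> B then F (fst e) (box, snd e) else 0)"
      have gfin: "finite {e. g box e > 0}" for box
      proof (rule finite_subset)
        show "{e. g box e > 0} \<subseteq> B \<times> UNIV" by (auto simp: g_def split: if_splits)
        show "finite (B \<times> (UNIV :: bool set))" using finB by (simp add: B_def)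
      qed
      define T where "T = (\<lambda>box. Abs_multiset (g box))"
      have cT: "count (T box) = g box" for box unfolding T_def using gfin by (simp add: count_Abs_multiset)
      have Fk: "F k \<in> C k" if "k \<in> B" for k using F that by auto
      have setT: "set_mset (T box) = S box" for box
      proof (intro equalityI subsetI)
        fix e assume "e \<in># T box"
        then have "g box e > 0" using cT by (metis count_greater_zero_iff)
        then have "box \<in> sh" "fst e \<in> B" "F (fst e) (box, snd e) > 0" by (auto simp: g_def split: if_splits)
        moreover have "(box, snd e) \<in> E (fst e)"
        proof (rule ccontr)
          assume "(box, snd e) \<notin> E (fst e)"
          then have "F (fst e) (box, snd e) = 0" using Fk[OF \<open>fst e \<in> B\<close>] unfolding C_def by blast
          with calculation show False by simp
        qed
        then show "e \<in> S box" by (auto simp: E_def)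
      next
        fix e assume e: "e \<in> S box"
        obtain k p where kp: "e = (k, p)" by fastforce
        have "k \<in> B" "box \<in> sh" using inB e kp by auto
        moreover have "(box, p) \<in> E k" using e kp \<open>box \<in> sh\<close> by (auto simp: E_def)
        then have "F k (box, p) \<ge> 1" using Fk[OF \<open>k \<in> B\<close>] by (auto simp: C_def)
        ultimately have "g box e > 0" by (simp add: g_def kp)
        then show "e \<in># T box" using cT by (metis count_greater_zero_iff)
      qed
      have wT: "weak_svt lam T" unfolding weak_svt_iff using setT S by simp
      have cont: "wcontent lam T k = b k" for k
      proof (cases "k \<in> B")
        case True
        have "wcontent lam T k = (\<Sum>box\<in>sh. F k (box, False) + F k (box, True))"
          unfolding wcontent_def sh_def[symmetric] by (rule sum.cong) (auto simp: cT g_def True)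
        also have "\<dots> = sum (F k) (E k)"
          using Fk[OF True] by (intro sum_bool_shape[symmetric, OF fsh _ Esub]) (auto simp: C_def)
        also have "\<dots> = b k" using Fk[OF True] by (simp add: C_def)
        finally show ?thesis .
      next
        case False
        then show ?thesis unfolding wcontent_def by (auto simp: cT g_def B_def)
      qed
      have TFb: "T \<in> Fb" unfolding Fb_def using wT cont setT by auto
      have "\<Psi> T = F"
      proof (rule ext)
        fix k show "\<Psi> T k = F k"
        proof (cases "k \<in> B")
          case False
          then show ?thesis using PiE_arb[OF F False] by (simp add: PsiT)
        next
          case kB: True
          show ?thesis
          proof (rule ext)
            fix x :: "(nat \<times> nat) \<times> bool"
            obtain box p where x: "x = (box, p)" by fastforce
            show "\<Psi> T k x = F k x"
            proof (cases "box \<in> sh")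
              case True
              have "\<Psi> T k x = count (T box) (k, p)" using kB True by (simp add: PsiT x)
              also have "\<dots> = F k x" using kB True by (simp add: cT g_def x)
              finally show ?thesis .
            next
              case False
              then have "x \<notin> E k" using x by (auto simp: E_def)
              then have "F k x = 0" using Fk[OF kB] unfolding C_def by blast
              moreover have "\<Psi> T k x = 0" using kB False by (simp add: PsiT x)
              ultimately show ?thesis by simp
            qed
          qed
        qed
      qed
      then show "F \<in> \<Psi> ` Fb" using TFb by blast
    qed
  qed
  have finC: "finite (C k)" for k unfolding C_def by (rule comp_finite[OF finE])
  show "finite {T. weak_svt lam T \<and> wcontent lam T = b \<and> (\<lambda>x. set_mset (T x)) = S}"
    unfolding Fb_def[symmetric] using bij_betw_finite[OF bij] finB finC
    by (simp add: finite_PiE B_def)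
  have "card Fb = card (Pi\<^sub>E B C)" by (rule bij_betw_same_card[OF bij])
  also have "\<dots> = (\<Prod>k\<in>B. card (C k))" using finB by (simp add: card_PiE B_def)
  also have "\<dots> = (\<Prod>k\<in>B. (b k - 1) choose (b k - scontent lam S k))"
  proof (rule prod.cong[OF refl])
    fix k assume k: "k \<in> B"
    have "1 \<le> scontent lam S k" using pos k by (simp add: B_def)
    then have ne: "E k \<noteq> {}" using cardE[of k] by auto
    show "card (C k) = (b k - 1) choose (b k - scontent lam S k)"
      unfolding C_def using comp_card[OF finE ne, of "b k"] cardE[of k] le by simp
  qed
  finally show "card {T. weak_svt lam T \<and> wcontent lam T = b \<and> (\<lambda>x. set_mset (T x)) = S}
       = (\<Prod>k\<in>{k. b k \<noteq> 0}. (b k - 1) choose (b k - scontent lam S k))"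
    unfolding Fb_def B_def .
qed


lemma card_bool_le: "card {p::bool. (k, p) \<in># M} \<le> count M (k, False) + count M (k, True)"
proof -
  have "{p::bool. (k, p) \<in># M} \<subseteq> {False, True}" by auto
  have "card {p::bool. (k, p) \<in># M} = (\<Sum>p\<in>{p. (k, p) \<in># M}. 1)" by simp
  also have "\<dots> \<le> (\<Sum>p\<in>{p. (k, p) \<in># M}. count M (k, p))"
    by (rule sum_mono) (auto simp: Suc_le_eq)
  also have "\<dots> \<le> (\<Sum>p\<in>UNIV. count M (k, p))"
    by (rule sum_mono2) auto
  also have "\<dots> = count M (k, False) + count M (k, True)" by (simp add: UNIV_bool)
  finally show ?thesis .
qed

lemma ssize_eq:
  assumes S: "svt lam S" and le: "\<forall>k. scontent lam S k \<le> b k" and finB: "finite {k. b k \<noteq> 0}"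
  shows "ssize lam S = (\<Sum>k\<in>{k. b k \<noteq> 0}. scontent lam S k)"
proof -
  have c: "card (S box) = (\<Sum>k\<in>{k. b k \<noteq> 0}. card {p. (k, p) \<in> S box})" if "box \<in> shifted_shape lam" for box
  proof -
    have "S box = Sigma {k. b k \<noteq> 0} (\<lambda>k. {p. (k, p) \<in> S box})"
    proof -
      have "x \<in> S box \<Longrightarrow> b (fst x) \<noteq> 0" for x using entry_in_B(1)[OF S le, of "fst x" "snd x" box] by simp
      then show ?thesis by auto
    qed
    then have "card (S box) = card (Sigma {k. b k \<noteq> 0} (\<lambda>k. {p. (k, p) \<in> S box}))" by simp
    also have "\<dots> = (\<Sum>k\<in>{k. b k \<noteq> 0}. card {p. (k, p) \<in> S box})"
      using finB by (simp add: card_SigmaI)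
    finally show ?thesis .
  qed
  have "ssize lam S = (\<Sum>box\<in>shifted_shape lam. \<Sum>k\<in>{k. b k \<noteq> 0}. card {p. (k, p) \<in> S box})"
    unfolding ssize_def by (rule sum.cong) (auto simp: c)
  also have "\<dots> = (\<Sum>k\<in>{k. b k \<noteq> 0}. scontent lam S k)"
    unfolding scontent_def by (rule sum.swap)
  finally show ?thesis .
qed

lemma psize_le_ssize:
  assumes S: "svt lam S"
  shows "psize lam \<le> ssize lam S"
proof -
  have "psize lam = (\<Sum>box\<in>shifted_shape lam. 1)" by (simp add: card_shape)
  also have "\<dots> \<le> ssize lam S"
    unfolding ssize_def
  proof (rule sum_mono)
    fix box assume "box \<in> shifted_shape lam"
    then have "finite (S box)" "S box \<noteq> {}" using S unfolding svt_def by auto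
    then show "1 \<le> card (S box)" by (simp add: Suc_le_eq card_gt_0_iff)
  qed
  finally show ?thesis .
qed

theorem proposition3:
  fixes lam :: "nat list" and b :: "nat \<Rightarrow> nat"
  assumes "strict_partition lam"
    and "finite {k. b k \<noteq> 0}"
  shows "K_series lam b =
           (-1) ^ psize lam * subst_each_var (- fps_X / (1 - fps_X)) (GP_series lam) b"
proof -
  define sh where "sh = shifted_shape lam"
  define P where "P = psize lam"
  define B where "B = {k. b k \<noteq> 0}"
  define g :: "rat fps" where "g = - fps_X / (1 - fps_X)"
  define SS where "SS = {S. svt lam S \<and> (\<forall>k. scontent lam S k \<le> b k)}"
  define Fb where "Fb = (\<lambda>S. {T. weak_svt lam T \<and> wcontent lam T = b \<and> (\<lambda>x. set_mset (T x)) = S})"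
  define TT where "TT = {T. weak_svt lam T \<and> wcontent lam T = b}"
  define pi where "pi = (\<lambda>a. \<Prod>k\<in>B. fps_nth (g ^ a k) (b k))"
  define w where "w = (\<lambda>S. (-1::rat) ^ (ssize lam S - P) * pi (scontent lam S))"
  define Abox where "Abox = {a::nat\<Rightarrow>nat. \<forall>k. a k \<le> b k}"
  have finB: "finite B" using assms(2) by (simp add: B_def)
  have fsh: "finite sh" unfolding sh_def by (rule finite_shape)
  have finSS: "finite SS"
  proof (rule finite_subset)
    show "SS \<subseteq> {f. \<forall>x. (x \<in> sh \<longrightarrow> f x \<in> Pow (B \<times> UNIV)) \<and> (x \<notin> sh \<longrightarrow> f x = {})}"
    proof
      fix S assume "S \<in> SS" 
      then have S: "svt lam S" and le: "\<forall>k. scontent lam S k \<le> b k" by (auto simp: SS_def)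
      have "S x \<subseteq> B \<times> UNIV" for x
      proof
        fix e assume "e \<in> S x"
        then show "e \<in> B \<times> UNIV" using entry_in_B(1)[OF S le, of "fst e" "snd e" x] by (cases e) (auto simp: B_def)
      qed
      moreover have "x \<notin> sh \<Longrightarrow> S x = {}" for x using S unfolding svt_def sh_def by blast
      ultimately show "S \<in> {f. \<forall>x. (x \<in> sh \<longrightarrow> f x \<in> Pow (B \<times> UNIV)) \<and> (x \<notin> sh \<longrightarrow> f x = {})}"
        by auto
    qed
    show "finite {f. \<forall>x. (x \<in> sh \<longrightarrow> f x \<in> Pow (B \<times> (UNIV::bool set))) \<and> (x \<notin> sh \<longrightarrow> f x = {})}"
      by (rule finite_set_of_finite_funs) (use fsh finB in auto)
  qed
  have finAbox: "finite Abox"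
  proof (rule finite_subset)
    show "Abox \<subseteq> {f. \<forall>x. (x \<in> B \<longrightarrow> f x \<in> {..sum b B}) \<and> (x \<notin> B \<longrightarrow> f x = 0)}"
    proof
      fix a assume a: "a \<in> Abox"
      have "x \<in> B \<Longrightarrow> a x \<in> {..sum b B}" for x
        using a member_le_sum[of x B b] finB by (auto simp: Abox_def intro: order_trans)
      moreover have "x \<notin> B \<Longrightarrow> a x = 0" for x using a by (simp add: Abox_def B_def) (metis le_zero_eq)
      ultimately show "a \<in> {f. \<forall>x. (x \<in> B \<longrightarrow> f x \<in> {..sum b B}) \<and> (x \<notin> B \<longrightarrow> f x = 0)}" by auto
    qed
    show "finite {f. \<forall>x. (x \<in> B \<longrightarrow> f x \<in> {..sum b B}) \<and> (x \<notin> B \<longrightarrow> (f x::nat) = 0)}"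
      by (rule finite_set_of_finite_funs) (use finB in auto)
  qed
  have rhs: "subst_each_var g (GP_series lam) b = (\<Sum>S\<in>SS. w S)"
  proof -
    have "subst_each_var g (GP_series lam) b = (\<Sum>a\<in>Abox. GP_series lam a * pi a)"
      by (simp add: subst_each_var_def Abox_def pi_def B_def)
    also have "\<dots> = (\<Sum>a\<in>Abox. \<Sum>S\<in>{S\<in>SS. scontent lam S = a}. w S)"
    proof (rule sum.cong[OF refl])
      fix a assume a: "a \<in> Abox"
      have "{S. svt lam S \<and> scontent lam S = a} = {S\<in>SS. scontent lam S = a}"
        using a by (auto simp: SS_def Abox_def)
      then show "GP_series lam a * pi a = (\<Sum>S\<in>{S\<in>SS. scontent lam S = a}. w S)"
        by (simp add: GP_series_def w_def sum_distrib_right P_def)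
    qed
    also have "\<dots> = (\<Sum>S\<in>SS. w S)"
      by (rule sum.group[OF finSS finAbox]) (auto simp: SS_def Abox_def)
    finally show ?thesis .
  qed
  have perS: "finite (Fb S) \<and> of_nat (card (Fb S)) = (-1) ^ P * w S" if "S \<in> SS" for S
  proof -
    have S: "svt lam S" and le: "\<forall>k. scontent lam S k \<le> b k" using that by (auto simp: SS_def)
    show ?thesis
    proof (cases "\<forall>k. b k \<noteq> 0 \<longrightarrow> 1 \<le> scontent lam S k")
      case False
      then obtain k where bk: "b k \<noteq> 0" and a0: "scontent lam S k = 0" by auto
      have empty: "Fb S = {}"
      proof (rule ccontr)
        assume "Fb S \<noteq> {}"
        then obtain T where T: "weak_svt lam T" "wcontent lam T = b" "(\<lambda>x. set_mset (T x)) = S"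
          by (auto simp: Fb_def)
        have "wcontent lam T k \<noteq> 0" using T(2) bk by simp
        then obtain box where "count (T box) (k, False) + count (T box) (k, True) \<noteq> 0"
          unfolding wcontent_def by (metis (no_types, lifting) sum.neutral)
        then obtain p where "(k, p) \<in># T box" by (metis add.right_neutral count_inI)
        then have "(k, p) \<in> S box" using T(3) by auto
        then have "1 \<le> scontent lam S k" by (rule entry_in_B(3)[OF S le])
        with a0 show False by simp
      qed
      have "pi (scontent lam S) = 0"
        unfolding pi_def
      proof (rule prod_zero[OF finB])
        show "\<exists>k\<in>B. fps_nth (g ^ scontent lam S k) (b k) = 0"
          using bk a0 by (intro bexI[of _ k]) (auto simp: B_def g_def g_pow_nth)
      qed
      then show ?thesis using empty by (simp add: w_def)
    next
      case True
      have fin: "finite (Fb S)" and cd: "card (Fb S) = (\<Prod>k\<in>B. (b k - 1) choose (b k - scontent lam S k))"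
        using fiber[OF S le assms(2) True] by (simp_all add: Fb_def B_def)
      have pi_eq: "pi (scontent lam S) = (\<Prod>k\<in>B. (-1) ^ scontent lam S k * of_nat ((b k - 1) choose (b k - scontent lam S k)))"
        unfolding pi_def
      proof (rule prod.cong[OF refl])
        fix k assume k: "k \<in> B"
        then have "1 \<le> b k" "1 \<le> scontent lam S k" "scontent lam S k \<le> b k" using True le by (auto simp: B_def)
        then show "fps_nth (g ^ scontent lam S k) (b k) = (-1) ^ scontent lam S k * of_nat ((b k - 1) choose (b k - scontent lam S k))"
          by (simp add: g_def g_pow_nth)
      qed
      have ss: "ssize lam S = (\<Sum>k\<in>B. scontent lam S k)" using ssize_eq[OF S le assms(2)] by (simp add: B_def)
      have PS: "P \<le> ssize lam S" using psize_le_ssize[OF S] by (simp add: P_def)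
      have "pi (scontent lam S) = (-1) ^ ssize lam S * of_nat (card (Fb S))"
        by (simp add: pi_eq prod.distrib ss power_sum cd)
      then have "(-1) ^ P * w S = ((-1) ^ P * (-1) ^ (ssize lam S - P)) * (-1) ^ ssize lam S * of_nat (card (Fb S))"
        by (simp add: w_def)
      also have "(-1::rat) ^ P * (-1) ^ (ssize lam S - P) = (-1) ^ ssize lam S"
        using PS by (simp flip: power_add)
      also have "(-1::rat) ^ ssize lam S * (-1) ^ ssize lam S = 1"
        by (simp flip: power_add add: power_mult[symmetric] mult_2[symmetric])
      finally show ?thesis using fin by simp
    qed
  qed
  have TTeq: "TT = (\<Union>S\<in>SS. Fb S)"
  proof (intro equalityI subsetI)
    fix T assume T: "T \<in> TT"
    define S where "S = (\<lambda>x. set_mset (T x))"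
    have Sv: "svt lam S" using T by (simp add: TT_def S_def weak_svt_iff)
    have "scontent lam S k \<le> b k" for k
    proof -
      have "scontent lam S k \<le> wcontent lam T k"
        unfolding scontent_def wcontent_def by (rule sum_mono) (simp add: S_def card_bool_le)
      then show ?thesis using T by (simp add: TT_def)
    qed
    then have "S \<in> SS" using Sv by (simp add: SS_def)
    moreover have "T \<in> Fb S" using T by (simp add: TT_def Fb_def S_def)
    ultimately show "T \<in> (\<Union>S\<in>SS. Fb S)" by blast
  next
    fix T assume "T \<in> (\<Union>S\<in>SS. Fb S)"
    then show "T \<in> TT" by (auto simp: TT_def Fb_def)
  qed
  have "K_series lam b = of_nat (card TT)" by (simp add: K_series_def TT_def)
  also have "card TT = (\<Sum>S\<in>SS. card (Fb S))"
    unfolding TTeq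
    by (rule card_UN_disjoint[OF finSS]) (use perS in \<open>auto simp: Fb_def\<close>)
  also have "(of_nat (\<Sum>S\<in>SS. card (Fb S)) :: rat) = (\<Sum>S\<in>SS. (-1) ^ P * w S)"
    by (simp add: perS)
  also have "\<dots> = (-1) ^ P * (\<Sum>S\<in>SS. w S)" by (simp add: sum_distrib_left)
  finally show ?thesis using rhs[unfolded g_def] by (simp add: P_def)
qed

end
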